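(* Consider one-dimensional $L_2$-regularized linear regression trained by plain SGD with learning rate $\lambda>0$ and batch size $S$, with input variance $a>0$, target $u$ and weight decay $\gamma$, and write $k:=a+\gamma$ (assume $k\neq0$ and $2k-\lambda[k^2+\frac2Sa^2]\neq0$). Then the expected training loss and test loss are $$L_{\rm train}=\frac{a\gamma}{2k}\cdot\frac{2k-\lambda\left[k^2+\frac2Sa(a-\gamma)\right]}{2k-\lambda\left[k^2+\frac2Sa^2\right]}u^2,\qquad L_{\rm test}=\frac{a\gamma^2}{2k}\cdot\frac{2-\lambda k}{2k-\lambda\left[k^2+\frac2Sa^2\right]}u^2.$$
   Context: Loss (as $N\to\infty$): $L_\Gamma(w)=\frac12a(w-u)^2+\frac12\gamma w^2$, with data $x\sim\mathcal N(0,a)$ and labels $y=ux$. The stationary distribution of $w$ has mean $w^*=au/k$ and variance $\Sigma$ determined by $\lambda\cdot2k\Sigma-\lambda^2k^2\Sigma=\lambda^2C$, where the averaged minibatch noise variance is $C=\frac1S\left(2a^2\Sigma+\frac{2a^2\gamma^2u^2}{k^2}\right)$. $L_{\rm train}:=\mathbb{E}_w[L_\Gamma(w)]$ and $L_{\rm test}:=\frac12a\,\mathbb{E}_w[(w-u)^2]$. *)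

theory Defs
  imports "HOL-Probability.Probability"
begin

definition L_Gamma :: "real \<Rightarrow> real \<Rightarrow> real \<Rightarrow> real \<Rightarrow> real" where
  "L_Gamma a u \<gamma> w = 1/2 * a * (w - u)^2 + 1/2 * \<gamma> * w^2"

definition noise_C :: "nat \<Rightarrow> real \<Rightarrow> real \<Rightarrow> real \<Rightarrow> real \<Rightarrow> real \<Rightarrow> real" where
  "noise_C S a u \<gamma> k \<Sigma> = 1 / real S * (2 * a^2 * \<Sigma> + 2 * a^2 * \<gamma>^2 * u^2 / k^2)"

end

theory Submission
  imports Defs
begin

theorem corollary2:
  fixes M :: "'s measure" and w :: "'s \<Rightarrow> real"
    and lr a u \<gamma> k \<Sigma> :: real and S :: nat
  assumes "prob_space M"
    and "w \<in> borel_measurable M"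
    and "integrable M (\<lambda>x. (w x)^2)"
    and "lr > 0" and "S \<ge> 1" and "a > 0"
    and k_def: "k = a + \<gamma>" and "k \<noteq> 0"
    and "2*k - lr * (k^2 + 2 / real S * a^2) \<noteq> 0"
    and mean: "prob_space.expectation M w = a * u / k"
    and var: "prob_space.variance M w = \<Sigma>"
    and sigma_eq: "lr * 2 * k * \<Sigma> - lr^2 * k^2 * \<Sigma> = lr^2 * noise_C S a u \<gamma> k \<Sigma>"
  shows "(prob_space.expectation M (\<lambda>x. L_Gamma a u \<gamma> (w x))
           = a * \<gamma> / (2 * k) * (2*k - lr * (k^2 + 2 / real S * a * (a - \<gamma>)))
             / (2*k - lr * (k^2 + 2 / real S * a^2)) * u^2) \<and>
         (prob_space.expectation M (\<lambda>x. 1/2 * a * (w x - u)^2)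
           = a * \<gamma>^2 / (2 * k) * (2 - lr * k)
             / (2*k - lr * (k^2 + 2 / real S * a^2)) * u^2)"
proof -
  interpret P: prob_space M by fact
  have iw: "integrable M w"
    using P.square_integrable_imp_integrable assms(2,3) by blast
  have i2: "integrable M (\<lambda>x. (w x)^2)" by fact
  define E2 where "E2 = P.expectation (\<lambda>x. (w x)^2)"
  define m where "m = P.expectation w"
  have E2: "E2 = \<Sigma> + m^2" using P.variance_eq[OF iw i2] var unfolding E2_def m_def by simp
  have L1: "P.expectation (\<lambda>x. 1/2 * a * (w x - u)^2) = a/2 * E2 - a*u*m + a*u^2/2"
  proof -
    have f: "(\<lambda>x. 1/2 * a * (w x - u)^2) = (\<lambda>x. (a/2 * (w x)^2 + (- a*u) * w x) + a*u^2/2)"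
      by (auto simp: power2_diff algebra_simps)
    have "P.expectation (\<lambda>x. (a/2 * (w x)^2 + (- a*u) * w x) + a*u^2/2) = a/2 * E2 - a*u*m + a*u^2/2"
      using iw i2 unfolding E2_def m_def
      by (subst Bochner_Integration.integral_add, auto simp: P.prob_space)
    then show ?thesis by (simp only: f)
  qed
  have L2: "P.expectation (\<lambda>x. L_Gamma a u \<gamma> (w x)) = (a+\<gamma>)/2 * E2 - a*u*m + a*u^2/2"
  proof -
    have f: "(\<lambda>x. L_Gamma a u \<gamma> (w x)) = (\<lambda>x. ((a+\<gamma>)/2 * (w x)^2 + (- a*u) * w x) + a*u^2/2)"
      by (auto simp: L_Gamma_def power2_diff algebra_simps)
    have "P.expectation (\<lambda>x. ((a+\<gamma>)/2 * (w x)^2 + (- a*u) * w x) + a*u^2/2) = (a+\<gamma>)/2 * E2 - a*u*m + a*u^2/2"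
      using iw i2 unfolding E2_def m_def
      by (subst Bochner_Integration.integral_add, auto simp: P.prob_space)
    then show ?thesis by (simp only: f)
  qed
  define D where "D = 2*k - lr * (k^2 + 2 / real S * a^2)"
  have D0: "D \<noteq> 0" using assms(9) D_def by simp
  have S0: "real S > 0" using assms(5) by simp
  have "lr * (\<Sigma> * D) = lr * (lr * 2 * a^2 * \<gamma>^2 * u^2 / (real S * k^2))" (is "_ = lr * ?Z")
    using sigma_eq S0 \<open>k \<noteq> 0\<close> unfolding noise_C_def D_def
    apply (simp add: field_simps power2_eq_square)
    apply (drule arg_cong[where f="\<lambda>t. t * real S"])
    by (simp add: algebra_simps)
  hence "\<Sigma> * D = lr * 2 * a^2 * \<gamma>^2 * u^2 / (real S * k^2)" using assms(4) mult_left_cancel[of lr "\<Sigma> * D" ?Z] by linarith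
  hence Sig: "\<Sigma> = lr * 2 * a^2 * \<gamma>^2 * u^2 / (real S * k^2 * D)" using D0 S0 \<open>k \<noteq> 0\<close>
    by (simp add: field_simps)
  have m: "m = a*u/k" using mean m_def by simp
  have \<gamma>: "\<gamma> = k - a" using k_def by simp
  define P where "P = 2*k*real S - lr*k^2*real S - 2*lr*a^2"
  have DP: "D = P / real S" using S0 unfolding P_def D_def by (simp add: field_simps)
  have P0: "P \<noteq> 0" using D0 DP by auto
  have Dr: "2*k - lr * (k^2 + 2 / real S * a^2) = P / real S" using DP D_def by simp
  have Tr: "2*k - lr * (k^2 + 2 / real S * a * (a - \<gamma>)) = (P + 2*lr*a*\<gamma>) / real S"
    using S0 unfolding P_def by (simp add: field_simps power2_eq_square)
  have G1: "a/2 * (\<Sigma> + m^2) - a*u*m + a*u^2/2 = a * \<gamma>^2 / (2 * k) * (2 - lr * k) / (P / real S) * u^2"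
    unfolding Sig m DP using S0 P0 \<open>k \<noteq> 0\<close>
    apply (simp add: field_simps)
    unfolding P_def \<gamma> by (simp add: algebra_simps power2_eq_square)
  have G2: "(a+\<gamma>)/2 * (\<Sigma> + m^2) - a*u*m + a*u^2/2 = a * \<gamma> / (2 * k) * ((P + 2*lr*a*\<gamma>) / real S) / (P / real S) * u^2"
    unfolding Sig m DP using S0 P0 \<open>k \<noteq> 0\<close>
    apply (simp add: field_simps)
    unfolding P_def \<gamma> by (simp add: algebra_simps power2_eq_square)
  show ?thesis
    unfolding L1 L2 E2 Dr Tr using G1 G2 by simp
qed

end
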